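(* Let $(Q,\lambda)$ be an $\mathcal{R}$-characteristic pair on an admissible $n$-dimensional simple polytope $Q$ with $\ell$ vertices. Assume that for every term $B_i$ with $\dim B_i>1$ occurring in any retraction sequence of $Q$, $$\gcd\{g_{B_i}(v)\mid v\text{ a free vertex of }B_i\}=1.$$ Then for every prime $p$ there exists a retraction sequence $\{(B_i,E_i,b_i)\}_{i=1}^{\ell}$ of $Q$ with $\gcd\{p,g_{E_i}(b_i)\}=1$ for all $i=1,\dots,\ell$ (so $X(Q,\lambda)$ satisfies the hypothesis of Theorem 1.2 via the induced building sequence).
   Context: $Q$ is an $n$-dimensional simple convex polytope with facets $F_1,\dots,F_m$; $\lambda:\{F_1,\dots,F_m\}\to\mathbb{Z}^n$ is an $\mathcal{R}$-characteristic function, i.e. $\{\lambda(F_{i_1}),\dots,\lambda(F_{i_k})\}$ is linearly independent whenever $F_{i_1}\cap\cdots\cap F_{i_k}\ne\emptyset$. For a codimension-$k$ face $E=F_{i_1}\cap\cdots\cap F_{i_k}$, let $\rho_E:\mathbb{Z}^n\to\mathbb{Z}^n/\big((\mathrm{span}_{\mathbb{Z}}\{\lambda(F_{i_1}),\dots,\lambda(F_{i_k})\}\otimes\mathbb{R})\cap\mathbb{Z}^n\big)\cong\mathbb{Z}^{n-k}$, and for each facet $E\cap F_j\ne\emptyset$ ($j\notin\{i_1,\dots,i_k\}$) of $E$ let $\lambda_E(E\cap F_j)$ be the primitive vector in the direction of $\rho_E(\lambda(F_j))$. For a vertex $v=\bigcap_{s=1}^{n-k}(E\cap F_{j_s})$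 of $E$, $g_E(v)=|\det[\lambda_E(E\cap F_{j_1})^t,\dots,\lambda_E(E\cap F_{j_{n-k}})^t]|$ ($=1$ if $E=\{v\}$). A retraction sequence for $Q$ is a sequence of triples $(B_k,E_k,b_k)$, $k=1,\dots,\ell$: $B_1=E_1=Q$ and $b_1$ a vertex of $Q$; $B_k$ is the union of all faces of $B_{k-1}$ not containing $b_{k-1}$; $b_k$ is a free vertex of $B_k$, i.e. a vertex with a neighbourhood in $B_k$ homeomorphic as a manifold with corners to $\mathbb{R}^d_{\ge0}$ for some $d$, and $E_k$ is the unique $d$-dimensional face of $B_k$ containing $b_k$; the sequence ends with $B_\ell=E_\ell=\{b_\ell\}$. For a free vertex $v$ of such a $B_i$ with associated $d$-dimensional face $E$, write $g_{B_i}(v):=g_E(v)$. $Q$ is admissible if every complex $B_k$ obtained in this way (for any choices of free vertices) has at least one free vertex. *)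

theory Defs
  imports "HOL-Analysis.Analysis" "Jordan_Normal_Form.Determinant"
begin

(* Points of the polytope live in an abstract Euclidean space 'a, n = DIM('a).
   Facets are enumerated as F 0, ..., F (m-1); the characteristic function
   is lam :: nat => int vec (lam i = lambda(F i), an integer vector of dimension n). *)

definition nonempty_faces :: "'a::euclidean_space set \<Rightarrow> 'a set set" where
  "nonempty_faces Q = {G. G face_of Q \<and> G \<noteq> {}}"

definition is_vertex :: "'a::euclidean_space set \<Rightarrow> 'a \<Rightarrow> bool" where
  "is_vertex Q v \<longleftrightarrow> {v} face_of Q"

definition simple_polytope :: "'a::euclidean_space set \<Rightarrow> bool" where
  "simple_polytope Q \<longleftrightarrow> polytope Q \<and> aff_dim Q = int DIM('a) \<and>
     (\<forall>v. is_vertex Q v \<longrightarrow> card {G. G facet_of Q \<and> v \<in> G} = DIM('a))"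

definition lin_indep_family :: "nat \<Rightarrow> (nat \<Rightarrow> int vec) \<Rightarrow> nat set \<Rightarrow> bool" where
  "lin_indep_family n lam S \<longleftrightarrow>
     (\<forall>c :: nat \<Rightarrow> real.
        (\<forall>j<n. (\<Sum>i\<in>S. c i * real_of_int (vec_index (lam i) j)) = 0) \<longrightarrow> (\<forall>i\<in>S. c i = 0))"

definition R_characteristic ::
  "'a::euclidean_space set \<Rightarrow> nat \<Rightarrow> (nat \<Rightarrow> 'a set) \<Rightarrow> (nat \<Rightarrow> int vec) \<Rightarrow> bool" where
  "R_characteristic Q m F lam \<longleftrightarrow>
     bij_betw F {..<m} {G. G facet_of Q} \<and>
     (\<forall>i<m. lam i \<in> carrier_vec DIM('a)) \<and>
     (\<forall>S\<subseteq>{..<m}. (\<Inter>i\<in>S. F i) \<inter> Q \<noteq> {} \<longrightarrow> lin_indep_family DIM('a) lam S)"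

definition facet_idx :: "nat \<Rightarrow> (nat \<Rightarrow> 'a set) \<Rightarrow> 'a set \<Rightarrow> nat set" where
  "facet_idx m F E = {i. i < m \<and> E \<subseteq> F i}"

definition sat_lattice :: "nat \<Rightarrow> nat \<Rightarrow> (nat \<Rightarrow> 'a set) \<Rightarrow> (nat \<Rightarrow> int vec) \<Rightarrow> 'a set \<Rightarrow> int vec set" where
  "sat_lattice n m F lam E = {x \<in> carrier_vec n. \<exists>c :: nat \<Rightarrow> real.
      \<forall>j<n. real_of_int (vec_index x j) = (\<Sum>i\<in>facet_idx m F E. c i * real_of_int (vec_index (lam i) j))}"

(* rho is a surjective Z-linear map Z^n -> Z^(n-k) with kernel the saturated lattice,
   i.e. the quotient map Z^n -> Z^n / L_E composed with an identification with Z^(n-k) *)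
definition is_rho :: "nat \<Rightarrow> nat \<Rightarrow> (nat \<Rightarrow> 'a set) \<Rightarrow> (nat \<Rightarrow> int vec) \<Rightarrow> 'a set \<Rightarrow> (int vec \<Rightarrow> int vec) \<Rightarrow> bool" where
  "is_rho n m F lam E \<rho> \<longleftrightarrow>
     (let k = card (facet_idx m F E) in
       (\<forall>x\<in>carrier_vec n. \<forall>y\<in>carrier_vec n. \<rho> (x + y) = \<rho> x + \<rho> y) \<and>
       (\<forall>x\<in>carrier_vec n. \<forall>c. \<rho> (c \<cdot>\<^sub>v x) = c \<cdot>\<^sub>v \<rho> x) \<and>
       \<rho> ` carrier_vec n = carrier_vec (n - k) \<and>
       {x \<in> carrier_vec n. \<rho> x = 0\<^sub>v (n - k)} = sat_lattice n m F lam E)"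

definition rho :: "nat \<Rightarrow> nat \<Rightarrow> (nat \<Rightarrow> 'a set) \<Rightarrow> (nat \<Rightarrow> int vec) \<Rightarrow> 'a set \<Rightarrow> int vec \<Rightarrow> int vec" where
  "rho n m F lam E = (SOME \<rho>. is_rho n m F lam E \<rho>)"

definition primitive_dir :: "int vec \<Rightarrow> int vec" where
  "primitive_dir w = map_vec (\<lambda>x. x div Gcd (set\<^sub>v w)) w"

(* g_E(v) = |det[lambda_E(E \<inter> F_j) : v \<in> F_j, E \<not>\<subseteq> F_j]|  (= 1 if E = {v}) *)
definition g_face :: "nat \<Rightarrow> nat \<Rightarrow> (nat \<Rightarrow> 'a set) \<Rightarrow> (nat \<Rightarrow> int vec) \<Rightarrow> 'a set \<Rightarrow> 'a \<Rightarrow> nat" where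
  "g_face n m F lam E v =
     nat \<bar>det (mat_of_rows (n - card (facet_idx m F E))
        (map (\<lambda>j. primitive_dir (rho n m F lam E (lam j)))
           (sorted_list_of_set {j. j < m \<and> v \<in> F j \<and> \<not> E \<subseteq> F j})))\<bar>"

(* A complex B (union of faces of Q) is represented by the set of nonempty faces of Q it contains.
   v is a free vertex of B with associated face E: every face of B containing v is a face of E. *)
definition free_vertex :: "'a set set \<Rightarrow> 'a \<Rightarrow> 'a set \<Rightarrow> bool" where
  "free_vertex B v E \<longleftrightarrow> {v} \<in> B \<and> E \<in> B \<and> v \<in> E \<and> (\<forall>G\<in>B. v \<in> G \<longrightarrow> G \<subseteq> E)"

definition g_complex :: "nat \<Rightarrow> nat \<Rightarrow> (nat \<Rightarrow> 'a set) \<Rightarrow> (nat \<Rightarrow> int vec) \<Rightarrow> 'a set set \<Rightarrow> 'a \<Rightarrow> nat" where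
  "g_complex n m F lam B v = g_face n m F lam (THE E. free_vertex B v E) v"

definition retract :: "'a set set \<Rightarrow> 'a \<Rightarrow> 'a set set" where
  "retract B b = {G \<in> B. b \<notin> G}"

(* retraction sequence as a list of triples (B_k, E_k, b_k), k = 1..l  (list index k-1) *)
definition retraction_seq :: "'a::euclidean_space set \<Rightarrow> ('a set set \<times> 'a set \<times> 'a) list \<Rightarrow> bool" where
  "retraction_seq Q rs \<longleftrightarrow> rs \<noteq> [] \<and>
     fst (rs ! 0) = nonempty_faces Q \<and> fst (snd (rs ! 0)) = Q \<and>
     (\<forall>i<length rs. free_vertex (fst (rs ! i)) (snd (snd (rs ! i))) (fst (snd (rs ! i)))) \<and>
     (\<forall>i. Suc i < length rs \<longrightarrow> fst (rs ! Suc i) = retract (fst (rs ! i)) (snd (snd (rs ! i)))) \<and>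
     fst (last rs) = {{snd (snd (last rs))}} \<and> fst (snd (last rs)) = {snd (snd (last rs))}"

inductive_set reachable_complexes :: "'a::euclidean_space set \<Rightarrow> 'a set set set" for Q where
  start: "nonempty_faces Q \<in> reachable_complexes Q"
| step: "B \<in> reachable_complexes Q \<Longrightarrow> free_vertex B b E \<Longrightarrow> retract B b \<noteq> {} \<Longrightarrow>
         retract B b \<in> reachable_complexes Q"

definition admissible :: "'a::euclidean_space set \<Rightarrow> bool" where
  "admissible Q \<longleftrightarrow> (\<forall>B\<in>reachable_complexes Q. \<exists>v E. free_vertex B v E)"

definition complex_dim_gt1 :: "'a::euclidean_space set set \<Rightarrow> bool" where
  "complex_dim_gt1 B \<longleftrightarrow> (\<exists>G\<in>B. aff_dim G > 1)"

end

theory Submission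
  imports Defs
begin

lemma bezout_sum:
  fixes a :: "nat \<Rightarrow> int"
  shows "\<exists>y. (\<Sum>j<n. y j * a j) = Gcd (a ` {..<n})"
proof (induction n)
  case 0 show ?case by simp
next
  case (Suc n)
  then obtain y where y: "(\<Sum>j<n. y j * a j) = Gcd (a ` {..<n})" by blast
  obtain u v where uv: "u * a n + v * Gcd (a ` {..<n}) = gcd (a n) (Gcd (a ` {..<n}))"
    using bezout_int by blast
  define y' where "y' j = (if j = n then u else v * y j)" for j
  have "(\<Sum>j<Suc n. y' j * a j) = (\<Sum>j<n. y' j * a j) + u * a n" by (simp add: y'_def)
  also have "(\<Sum>j<n. y' j * a j) = v * (\<Sum>j<n. y j * a j)"
    by (simp add: y'_def sum_distrib_left mult.assoc)
  finally have "(\<Sum>j<Suc n. y' j * a j) = gcd (a n) (Gcd (a ` {..<n}))"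
    using y uv by (simp add: algebra_simps)
  then show ?case by (auto simp: lessThan_Suc Gcd_insert)
qed

lemma vec1_eq: "z \<in> carrier_vec 1 \<Longrightarrow> z = vec 1 (\<lambda>_. z $ 0)"
  by (rule eq_vecI) auto

lemma lattice_rho:
  fixes lam :: "nat \<Rightarrow> int vec" and S :: "nat set" and n :: nat
  assumes n: "n \<ge> 1" and fin: "finite S" and cS: "card S = n - 1"
    and car: "\<And>i. i \<in> S \<Longrightarrow> lam i \<in> carrier_vec n"
    and ind: "lin_indep_family n lam S"
    and y0: "y0 \<in> carrier_vec n"
    and y0n: "\<not>(\<exists>c::nat\<Rightarrow>real. \<forall>j<n. real_of_int (y0 $ j) = (\<Sum>i\<in>S. c i * real_of_int (lam i $ j)))"
  shows "\<exists>\<rho>. (\<forall>x\<in>carrier_vec n. \<forall>y\<in>carrier_vec n. \<rho> (x + y) = \<rho> x + \<rho> y) \<and>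
       (\<forall>x\<in>carrier_vec n. \<forall>c. \<rho> (c \<cdot>\<^sub>v x) = c \<cdot>\<^sub>v \<rho> x) \<and>
       \<rho> ` carrier_vec n = carrier_vec 1 \<and>
       {x \<in> carrier_vec n. \<rho> x = 0\<^sub>v 1} = {x \<in> carrier_vec n. \<exists>c :: nat \<Rightarrow> real.
          \<forall>j<n. real_of_int (x $ j) = (\<Sum>i\<in>S. c i * real_of_int (lam i $ j))}"
proof -
  define s where "s = sorted_list_of_set S"
  have ls: "length s = n - 1" using cS fin by (simp add: s_def)
  have ds: "distinct s" by (simp add: s_def)
  have ss: "set s = S" using fin by (simp add: s_def)
  have bij: "bij_betw ((!) s) {..<n-1} S"
    using bij_betw_nth[OF ds _ ss[symmetric]] ls by simp
  have sS: "i < n - 1 \<Longrightarrow> s ! i \<in> S" for i using ls ss nth_mem by force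
  define invs where "invs k = inv_into {..<n-1} ((!) s) k" for k
  have inv_s: "i < n - 1 \<Longrightarrow> invs (s ! i) = i" for i
    unfolding invs_def using bij by (simp add: bij_betw_def inv_into_f_f)
  have reix: "(\<Sum>k\<in>S. f k) = (\<Sum>i<n-1. f (s ! i))" for f :: "nat \<Rightarrow> real"
    using sum.reindex_bij_betw[OF bij, of f] by simp
  define M where "M x = mat n n (\<lambda>(i,j). if i < n - 1 then lam (s!i) $ j else x $ j)" for x :: "int vec"
  have Mc: "M x \<in> carrier_mat n n" for x by (simp add: M_def)
  define C where "C j = cofactor (M (0\<^sub>v n)) (n-1) j" for j
  have detlin: "det (M x) = (\<Sum>j<n. x $ j * C j)" for x
  proof -
    have "det (M x) = (\<Sum>j<n. M x $$ (n-1,j) * cofactor (M x) (n-1) j)"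
      by (rule laplace_expansion_row[OF Mc]) (use n in auto)
    also have "\<dots> = (\<Sum>j<n. x $ j * C j)"
    proof (rule sum.cong[OF refl])
      fix j assume j: "j \<in> {..<n}"
      have "mat_delete (M x) (n-1) j = mat_delete (M (0\<^sub>v n)) (n-1) j"
        by (rule eq_matI) (auto simp: mat_delete_def M_def)
      then show "M x $$ (n-1,j) * cofactor (M x) (n-1) j = x $ j * C j"
        using j n by (simp add: C_def cofactor_def M_def)
    qed
    finally show ?thesis .
  qed
  define R where "R x = map_mat real_of_int (M x)" for x
  have Rc: "(R x)\<^sup>T \<in> carrier_mat n n" for x by (simp add: R_def M_def)
  have detR: "det (R x) = real_of_int (det (M x))" for x
    unfolding R_def by (rule of_int_hom.hom_det)
  have entry: "((R x)\<^sup>T *\<^sub>v u) $ j = (\<Sum>i<n-1. real_of_int (lam (s!i) $ j) * u $ i) + real_of_int (x $ j) * u $ (n-1)"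
    if "j < n" "u \<in> carrier_vec n" for x u j
  proof -
    have "((R x)\<^sup>T *\<^sub>v u) $ j = (\<Sum>i\<in>{0..<n}. (R x) $$ (i,j) * u $ i)"
      using that by (simp add: R_def M_def scalar_prod_def)
    also have "\<dots> = (\<Sum>i<Suc (n-1). (R x) $$ (i,j) * u $ i)"
      using n by (simp add: atLeast0LessThan)
    also have "\<dots> = (\<Sum>i<n-1. (R x) $$ (i,j) * u $ i) + (R x) $$ (n-1,j) * u $ (n-1)"
      by simp
    also have "\<dots> = (\<Sum>i<n-1. real_of_int (lam (s!i) $ j) * u $ i) + real_of_int (x $ j) * u $ (n-1)"
      using that n by (simp add: R_def M_def)
    finally show ?thesis .
  qed
  have indep_u: "\<forall>i<n-1. u $ i = 0"
    if "\<forall>j<n. (\<Sum>i<n-1. real_of_int (lam (s!i) $ j) * u $ i) = 0" for u :: "real vec"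
  proof -
    define c where "c k = u $ invs k" for k
    have "\<forall>j<n. (\<Sum>k\<in>S. c k * real_of_int (lam k $ j)) = 0"
      using that by (simp add: reix c_def inv_s mult.commute)
    then have "\<forall>k\<in>S. c k = 0" using ind unfolding lin_indep_family_def by blast
    then show ?thesis using sS inv_s by (metis c_def)
  qed
  have detspan: "det (M x) = 0 \<longleftrightarrow> (\<exists>c::nat\<Rightarrow>real. \<forall>j<n. real_of_int (x $ j) = (\<Sum>i\<in>S. c i * real_of_int (lam i $ j)))"
    if x: "x \<in> carrier_vec n" for x
  proof -
    have "det (M x) = 0 \<longleftrightarrow> det ((R x)\<^sup>T) = 0"
      using detR det_transpose[of "R x" n] by (simp add: R_def M_def)
    also have "\<dots> \<longleftrightarrow> (\<exists>u. u \<in> carrier_vec n \<and> u \<noteq> 0\<^sub>v n \<and> (R x)\<^sup>T *\<^sub>v u = 0\<^sub>v n)"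
      by (rule det_0_iff_vec_prod_zero_field[OF Rc])
    also have "\<dots> \<longleftrightarrow> (\<exists>c::nat\<Rightarrow>real. \<forall>j<n. real_of_int (x $ j) = (\<Sum>i\<in>S. c i * real_of_int (lam i $ j)))"
    proof
      assume "\<exists>u. u \<in> carrier_vec n \<and> u \<noteq> 0\<^sub>v n \<and> (R x)\<^sup>T *\<^sub>v u = 0\<^sub>v n"
      then obtain u where u: "u \<in> carrier_vec n" "u \<noteq> 0\<^sub>v n" "(R x)\<^sup>T *\<^sub>v u = 0\<^sub>v n" by blast
      have e0: "(\<Sum>i<n-1. real_of_int (lam (s!i) $ j) * u $ i) + real_of_int (x $ j) * u $ (n-1) = 0"
        if "j < n" for j
        using entry[OF that u(1), of x] u(3) that by (metis index_zero_vec(1))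
      show "\<exists>c::nat\<Rightarrow>real. \<forall>j<n. real_of_int (x $ j) = (\<Sum>i\<in>S. c i * real_of_int (lam i $ j))"
      proof (cases "u $ (n-1) = 0")
        case True
        then have "\<forall>i<n-1. u $ i = 0" using e0 by (intro indep_u) simp
        have un0: "u $ (n-1) = 0" by fact
        have "u = 0\<^sub>v n"
        proof (rule eq_vecI)
          fix i assume "i < dim_vec (0\<^sub>v n :: real vec)"
          then have i: "i < n" by simp
          show "u $ i = 0\<^sub>v n $ i"
          proof (cases "i < n - 1")
            case True then show ?thesis using \<open>\<forall>i<n-1. u $ i = 0\<close> i by simp
          next
            case False then have "i = n - 1" using i by simp
            then show ?thesis using un0 i by simp
          qed
        qed (use u(1) in simp)
        then show ?thesis using u(2) by simp
      next
        case False
        define c where "c k = - u $ invs k / u $ (n-1)" for k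
        show ?thesis
        proof (intro exI allI impI)
          fix j assume j: "j < n"
          have "(\<Sum>k\<in>S. c k * real_of_int (lam k $ j)) = (\<Sum>i<n-1. c (s!i) * real_of_int (lam (s!i) $ j))"
            by (rule reix)
          also have "\<dots> = - (\<Sum>i<n-1. real_of_int (lam (s!i) $ j) * u $ i) / u $ (n-1)"
            by (simp add: c_def inv_s sum_divide_distrib sum_negf mult.commute)
          also have "\<dots> = real_of_int (x $ j)"
            using e0[OF j] False by (simp add: field_simps)
          finally show "real_of_int (x $ j) = (\<Sum>k\<in>S. c k * real_of_int (lam k $ j))" by simp
        qed
      qed
    next
      assume "\<exists>c::nat\<Rightarrow>real. \<forall>j<n. real_of_int (x $ j) = (\<Sum>i\<in>S. c i * real_of_int (lam i $ j))"
      then obtain c :: "nat \<Rightarrow> real" where c: "\<forall>j<n. real_of_int (x $ j) = (\<Sum>i\<in>S. c i * real_of_int (lam i $ j))" by blast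
      define u where "u = vec n (\<lambda>i. if i < n - 1 then c (s!i) else -1)"
      have uc: "u \<in> carrier_vec n" by (simp add: u_def)
      have "u $ (n-1) = -1" using n by (simp add: u_def)
      moreover have "(0\<^sub>v n :: real vec) $ (n-1) = 0" using n by simp
      ultimately have un: "u \<noteq> 0\<^sub>v n" by auto
      have "(R x)\<^sup>T *\<^sub>v u = 0\<^sub>v n"
      proof (rule eq_vecI)
        fix j assume "j < dim_vec (0\<^sub>v n :: real vec)"
        then have j: "j < n" by simp
        have "((R x)\<^sup>T *\<^sub>v u) $ j = (\<Sum>i<n-1. real_of_int (lam (s!i) $ j) * c (s!i)) - real_of_int (x $ j)"
          using entry[OF j uc, of x] n by (simp add: u_def)
        also have "\<dots> = 0" using c j reix[of "\<lambda>k. c k * real_of_int (lam k $ j)"] by (simp add: mult.commute)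
        finally show "((R x)\<^sup>T *\<^sub>v u) $ j = 0\<^sub>v n $ j" using j by simp
      qed (simp add: R_def M_def)
      then show "\<exists>u. u \<in> carrier_vec n \<and> u \<noteq> 0\<^sub>v n \<and> (R x)\<^sup>T *\<^sub>v u = 0\<^sub>v n" using uc un by blast
    qed
    finally show ?thesis .
  qed
  define g where "g = Gcd (C ` {..<n})"
  have "det (M y0) \<noteq> 0" using detspan[OF y0] y0n by blast
  then have "\<exists>j<n. C j \<noteq> 0" using detlin[of y0] by (metis (no_types, lifting) lessThan_iff mult_zero_right sum.neutral)
  then have g0: "g \<noteq> 0" unfolding g_def Gcd_0_iff by auto
  define w where "w j = C j div g" for j
  have Cw: "j < n \<Longrightarrow> C j = g * w j" for j
    unfolding w_def g_def by (simp add: Gcd_dvd)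
  have detw: "det (M x) = g * (\<Sum>j<n. x $ j * w j)" for x
    by (simp add: detlin Cw sum_distrib_left algebra_simps)
  define \<rho> where "\<rho> x = vec 1 (\<lambda>_. \<Sum>j<n. x $ j * w j)" for x :: "int vec"
  have r0: "\<rho> x = 0\<^sub>v 1 \<longleftrightarrow> (\<Sum>j<n. x $ j * w j) = 0" for x
  proof
    assume "\<rho> x = 0\<^sub>v 1" then have "\<rho> x $ 0 = 0" by simp
    then show "(\<Sum>j<n. x $ j * w j) = 0" by (simp add: \<rho>_def)
  next
    assume "(\<Sum>j<n. x $ j * w j) = 0" then show "\<rho> x = 0\<^sub>v 1"
      by (intro eq_vecI) (auto simp: \<rho>_def)
  qed
  obtain y where y: "(\<Sum>j<n. y j * C j) = g" using bezout_sum[of C n] unfolding g_def by blast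
  define x0 where "x0 = vec n y"
  have x0c: "x0 \<in> carrier_vec n" by (simp add: x0_def)
  have "g * (\<Sum>j<n. x0 $ j * w j) = g * 1"
    using y by (simp add: x0_def sum_distrib_left Cw algebra_simps)
  then have x01: "(\<Sum>j<n. x0 $ j * w j) = 1" using g0 by simp
  show ?thesis
  proof (intro exI[of _ \<rho>] conjI ballI allI)
    fix x y :: "int vec" assume "x \<in> carrier_vec n" "y \<in> carrier_vec n"
    then show "\<rho> (x + y) = \<rho> x + \<rho> y"
      by (intro eq_vecI) (auto simp: \<rho>_def sum.distrib algebra_simps)
  next
    fix x :: "int vec" and c :: int assume "x \<in> carrier_vec n"
    then show "\<rho> (c \<cdot>\<^sub>v x) = c \<cdot>\<^sub>v \<rho> x"
      by (intro eq_vecI) (auto simp: \<rho>_def sum_distrib_left algebra_simps)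
  next
    show "\<rho> ` carrier_vec n = carrier_vec 1"
    proof
      show "\<rho> ` carrier_vec n \<subseteq> carrier_vec 1" by (auto simp: \<rho>_def)
    next
      show "carrier_vec 1 \<subseteq> \<rho> ` carrier_vec n"
      proof
        fix z :: "int vec" assume z: "z \<in> carrier_vec 1"
        have "(\<Sum>j<n. ((z $ 0) \<cdot>\<^sub>v x0) $ j * w j) = z $ 0 * (\<Sum>j<n. x0 $ j * w j)"
          using x0c by (simp add: sum_distrib_left mult.assoc)
        then have "\<rho> ((z $ 0) \<cdot>\<^sub>v x0) = vec 1 (\<lambda>_. z $ 0)"
          using x01 by (simp add: \<rho>_def)
        also have "\<dots> = z" using vec1_eq[OF z] by simp
        finally show "z \<in> \<rho> ` carrier_vec n" using x0c by (metis image_eqI smult_carrier_vec)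
      qed
    qed
  next
    show "{x \<in> carrier_vec n. \<rho> x = 0\<^sub>v 1} = {x \<in> carrier_vec n. \<exists>c :: nat \<Rightarrow> real.
          \<forall>j<n. real_of_int (x $ j) = (\<Sum>i\<in>S. c i * real_of_int (lam i $ j))}"
      using detspan detw g0 r0 by auto
  qed
qed

lemma geo_edge:
  fixes Q :: "'a::euclidean_space set"
  assumes sp: "simple_polytope Q" and E: "E face_of Q" and vE: "v \<in> E"
    and vv: "{v} face_of Q" and d1: "aff_dim E = 1"
  shows "card {G. G facet_of Q \<and> E \<subseteq> G} = DIM('a) - 1 \<and>
         card {G. G facet_of Q \<and> v \<in> G \<and> \<not> E \<subseteq> G} = 1"
proof -
  let ?n = "DIM('a)"
  have pQ: "polytope Q" and aQ: "aff_dim Q = int ?n"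
    and cv: "card {G. G facet_of Q \<and> v \<in> G} = ?n"
    using sp vv unfolding simple_polytope_def is_vertex_def by auto
  have phQ: "polyhedron Q" using pQ by (rule polytope_imp_polyhedron)
  have ahQ: "affine hull Q = UNIV" using aQ aff_dim_eq_full by blast
  have vQ: "v \<in> Q" using vv face_of_imp_subset by blast
  obtain H where fH: "finite H" and seq: "Q = affine hull Q \<inter> \<Inter>H"
    and hs: "\<And>h. h \<in> H \<Longrightarrow> \<exists>a b. a \<noteq> 0 \<and> h = {x. a \<bullet> x \<le> b}"
    and mn: "\<And>F'. F' \<subset> H \<Longrightarrow> Q \<subset> (affine hull Q) \<inter> \<Inter>F'"
    using phQ by (simp add: polyhedron_Int_affine_minimal) meson
  then obtain a b where ab: "\<And>h. h \<in> H \<Longrightarrow> a h \<noteq> 0 \<and> h = {x. a h \<bullet> x \<le> b h}"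
    by metis
  have Qeq: "x \<in> Q \<longleftrightarrow> (\<forall>h\<in>H. a h \<bullet> x \<le> b h)" for x
  proof -
    have "x \<in> Q \<longleftrightarrow> x \<in> \<Inter>H" using seq ahQ by auto
    also have "\<dots> \<longleftrightarrow> (\<forall>h\<in>H. a h \<bullet> x \<le> b h)" using ab by auto
    finally show ?thesis .
  qed
  define \<phi> where "\<phi> h = Q \<inter> {x. a h \<bullet> x = b h}" for h
  have facets: "G facet_of Q \<longleftrightarrow> (\<exists>h\<in>H. G = \<phi> h)" for G
    using facet_of_polyhedron_explicit[OF fH seq ab mn] unfolding \<phi>_def by blast
  have witness: "\<exists>w\<in>Q. a h \<bullet> w = b h \<and> (\<forall>h'\<in>H-{h}. a h' \<bullet> w < b h')" if hH: "h \<in> H" for h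
  proof -
    have ri: "rel_interior Q = {x \<in> Q. \<forall>h\<in>H. a h \<bullet> x < b h}"
      by (rule rel_interior_polyhedron_explicit[OF fH seq ab mn])
    have "rel_interior Q \<noteq> {}"
      using rel_interior_eq_empty[OF polyhedron_imp_convex[OF phQ]] vQ by auto
    then obtain x where x: "x \<in> Q" "\<forall>h\<in>H. a h \<bullet> x < b h" using ri by auto
    have "H - {h} \<subset> H" using hH by auto
    then have "Q \<subset> affine hull Q \<inter> \<Inter>(H - {h})" by (rule mn)
    then obtain z where z: "z \<in> \<Inter>(H - {h})" "z \<notin> Q" by auto
    have zle: "\<forall>h'\<in>H-{h}. a h' \<bullet> z \<le> b h'" using z(1) ab by auto
    have zh: "a h \<bullet> z > b h"
    proof (rule ccontr)
      assume "\<not> a h \<bullet> z > b h"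
      then have "\<forall>h'\<in>H. a h' \<bullet> z \<le> b h'" using zle by (metis Diff_iff not_less singletonD)
      then show False using z(2) Qeq by blast
    qed
    have xh: "a h \<bullet> x < b h" using x hH by auto
    define t where "t = (b h - a h \<bullet> x) / (a h \<bullet> z - a h \<bullet> x)"
    have t0: "0 < t" and t1: "t < 1" using xh zh by (auto simp: t_def field_simps)
    define w where "w = x + t *\<^sub>R (z - x)"
    have aw: "a h' \<bullet> w = (1 - t) * (a h' \<bullet> x) + t * (a h' \<bullet> z)" for h'
      by (simp add: w_def inner_add_right inner_diff_right algebra_simps)
    have tq: "t * (a h \<bullet> z - a h \<bullet> x) = b h - a h \<bullet> x" using xh zh by (simp add: t_def)
    have "a h \<bullet> w = a h \<bullet> x + t * (a h \<bullet> z - a h \<bullet> x)" by (simp add: aw algebra_simps)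
    then have wh: "a h \<bullet> w = b h" using tq by simp
    have wlt: "\<forall>h'\<in>H-{h}. a h' \<bullet> w < b h'"
    proof
      fix h' assume h': "h' \<in> H - {h}"
      have "(1 - t) * (a h' \<bullet> x) < (1 - t) * b h'" using x h' t1 by auto
      moreover have "t * (a h' \<bullet> z) \<le> t * b h'" using zle h' t0 by (simp add: mult_left_mono)
      ultimately show "a h' \<bullet> w < b h'" unfolding aw by (simp add: algebra_simps)
    qed
    have "w \<in> Q" unfolding Qeq using wh wlt by (metis Diff_iff empty_iff insert_iff less_eq_real_def order_refl)
    then show ?thesis using wh wlt by blast
  qed
  have injphi: "inj_on \<phi> H"
  proof (rule inj_onI)
    fix h1 h2 assume h1: "h1 \<in> H" and h2: "h2 \<in> H" and eq: "\<phi> h1 = \<phi> h2"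
    show "h1 = h2"
    proof (rule ccontr)
      assume ne: "h1 \<noteq> h2"
      obtain w where w: "w \<in> Q" "a h1 \<bullet> w = b h1" "\<forall>h'\<in>H-{h1}. a h' \<bullet> w < b h'"
        using witness[OF h1] by blast
      have "w \<in> \<phi> h2" using eq w unfolding \<phi>_def by auto
      then have "a h2 \<bullet> w = b h2" by (simp add: \<phi>_def)
      moreover have "a h2 \<bullet> w < b h2" using w(3) h2 ne by auto
      ultimately show False by simp
    qed
  qed
  define A where "A = {h \<in> H. a h \<bullet> v = b h}"
  have AH: "A \<subseteq> H" and fA: "finite A" using fH by (auto simp: A_def)
  have facv: "{G. G facet_of Q \<and> v \<in> G} = \<phi> ` A"
    using vQ unfolding facets by (auto simp: A_def \<phi>_def)
  have cA: "card A = ?n"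
    using cv facv card_image[OF inj_on_subset[OF injphi AH]] by simp
  have n1: "?n \<ge> 1" by (simp add: DIM_positive Suc_leI)
  have vneQ: "{v} \<noteq> Q" using aQ n1 by (metis aff_dim_sing of_nat_0 not_one_le_zero of_nat_eq_iff)
  have vint: "{v} = \<Inter>{F. F facet_of Q \<and> {v} \<subseteq> F}"
    by (rule face_of_polyhedron[OF phQ vv]) (use vneQ in auto)
  have vuniq: "y = v" if "y \<in> Q" "\<forall>h\<in>A. a h \<bullet> y = b h" for y
  proof -
    have "y \<in> \<Inter>{F. F facet_of Q \<and> {v} \<subseteq> F}"
    proof
      fix F assume "F \<in> {F. F facet_of Q \<and> {v} \<subseteq> F}"
      then obtain h where "h \<in> H" "F = \<phi> h" "v \<in> F" unfolding facets by auto
      then show "y \<in> F" using that by (auto simp: A_def \<phi>_def)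
    qed
    then show ?thesis using vint by blast
  qed
  have vlt: "\<forall>h\<in>H-A. a h \<bullet> v < b h" using vQ Qeq by (force simp: A_def)
  define U where "U = (\<Inter>h\<in>H-A. {x. a h \<bullet> x < b h})"
  have "open U" unfolding U_def using fH by (intro open_INT) (auto intro: open_halfspace_lt)
  moreover have "v \<in> U" using vlt by (auto simp: U_def)
  ultimately obtain e where e: "e > 0" "ball v e \<subseteq> U" by (meson openE)
  have dirQ: "\<exists>t>0. v + t *\<^sub>R d \<in> Q" if dA: "\<forall>h\<in>A. a h \<bullet> d \<le> 0" for d
  proof -
    define t where "t = e / (2 * (norm d + 1))"
    have "2 * (norm d + 1) > 0" by (simp add: add_nonneg_pos)
    then have t0: "t > 0" using e unfolding t_def by (simp only: divide_pos_pos)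
    have "t * norm d < e"
    proof -
      have "t * norm d \<le> t * (norm d + 1)" using t0 by simp
      also have "\<dots> = e / 2"
      proof -
        have nd: "norm d + 1 > 0" by (simp add: add_nonneg_pos)
        show ?thesis unfolding t_def using nd by (simp add: field_simps)
      qed
      finally show ?thesis using e by simp
    qed
    then have "v + t *\<^sub>R d \<in> ball v e" using t0 by (simp add: dist_norm)
    then have "v + t *\<^sub>R d \<in> U" using e by blast
    then have "\<forall>h\<in>H-A. a h \<bullet> (v + t *\<^sub>R d) < b h" by (auto simp: U_def)
    moreover have "\<forall>h\<in>A. a h \<bullet> (v + t *\<^sub>R d) \<le> b h"
    proof
      fix h assume h: "h \<in> A"
      have "a h \<bullet> (v + t *\<^sub>R d) = b h + t * (a h \<bullet> d)" using h by (simp add: A_def inner_add_right)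
      also have "\<dots> \<le> b h" using dA h t0 by (simp add: mult_nonneg_nonpos)
      finally show "a h \<bullet> (v + t *\<^sub>R d) \<le> b h" .
    qed
    ultimately have "v + t *\<^sub>R d \<in> Q" unfolding Qeq by (metis Diff_iff less_eq_real_def)
    then show ?thesis using t0 by blast
  qed
  have spanA: "span (a ` A) = UNIV"
  proof (rule ccontr)
    assume "span (a ` A) \<noteq> UNIV"
    then have "dim (a ` A) < ?n" using dim_eq_full dim_subset_UNIV by (metis dim_UNIV le_neq_implies_less)
    then obtain d where d: "d \<noteq> 0" "\<And>y. y \<in> span (a ` A) \<Longrightarrow> real_inner_class.orthogonal d y"
      by (rule orthogonal_to_subspace_exists) blast
    have dA: "\<forall>h\<in>A. a h \<bullet> d = 0"
      using d(2) span_base by (metis image_eqI real_inner_class.orthogonal_def inner_commute)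
    then have "\<forall>h\<in>A. a h \<bullet> d \<le> 0" by simp
    then obtain t where t: "t > 0" "v + t *\<^sub>R d \<in> Q" using dirQ by blast
    have "\<forall>h\<in>A. a h \<bullet> (v + t *\<^sub>R d) = b h" using dA by (simp add: A_def inner_add_right)
    then have "v + t *\<^sub>R d = v" using vuniq t by blast
    then show False using t d by simp
  qed
  have cardaA: "card (a ` A) = ?n"
  proof -
    have "dim (UNIV :: 'a set) \<le> card (a ` A)"
      by (rule span_card_ge_dim) (use spanA fA in auto)
    moreover have "card (a ` A) \<le> card A" using fA by (rule card_image_le)
    ultimately show ?thesis using cA by simp
  qed
  have injA: "inj_on a A" using cardaA cA fA by (simp add: eq_card_imp_inj_on)
  have dir2: "\<exists>d. a h1 \<bullet> d < 0 \<and> (\<forall>h\<in>A-{h1}. a h \<bullet> d = 0)" if h1: "h1 \<in> A" for h1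
  proof -
    have cB: "card (a ` (A - {h1})) = ?n - 1"
      using injA h1 fA by (simp add: card_image inj_on_diff cA)
    have "dim (a ` (A - {h1})) \<le> ?n - 1"
      using dim_le_card'[of "a ` (A - {h1})"] cB fA by simp
    then have "dim (a ` (A - {h1})) < ?n" using n1 by linarith
    then obtain d where d: "d \<noteq> 0" "\<And>y. y \<in> span (a ` (A - {h1})) \<Longrightarrow> real_inner_class.orthogonal d y"
      by (rule orthogonal_to_subspace_exists) blast
    have d0: "\<forall>h\<in>A-{h1}. a h \<bullet> d = 0"
      using d(2) span_base by (metis image_eqI real_inner_class.orthogonal_def inner_commute)
    have "a h1 \<bullet> d \<noteq> 0"
    proof
      assume "a h1 \<bullet> d = 0"
      then have "\<forall>y\<in>a ` A. real_inner_class.orthogonal d y" using d0 by (auto simp: real_inner_class.orthogonal_def inner_commute)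
      then have "real_inner_class.orthogonal d d" using orthogonal_to_span[of d "a ` A" d] spanA by auto
      then show False using d(1) by (simp add: real_inner_class.orthogonal_def)
    qed
    then show ?thesis
    proof (cases "a h1 \<bullet> d < 0")
      case True then show ?thesis using d0 by blast
    next
      case False
      then have "a h1 \<bullet> (- d) < 0" using \<open>a h1 \<bullet> d \<noteq> 0\<close> by simp
      moreover have "\<forall>h\<in>A-{h1}. a h \<bullet> (- d) = 0" using d0 by simp
      ultimately show ?thesis by blast
    qed
  qed
  show ?thesis
  proof (cases "E = Q")
    case True
    have n1': "?n = 1" using d1 aQ True by simp
    have nf: "\<not> (G facet_of Q \<and> Q \<subseteq> G)" for G
    proof
      assume "G facet_of Q \<and> Q \<subseteq> G"
      then have "G facet_of Q" "G = Q" using facet_of_imp_subset by blast+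
      then show False by simp
    qed
    have "{G. G facet_of Q \<and> E \<subseteq> G} = {}"
      using True nf by blast
    moreover have "{G. G facet_of Q \<and> v \<in> G \<and> \<not> E \<subseteq> G} = {G. G facet_of Q \<and> v \<in> G}"
      using True nf by blast
    ultimately show ?thesis using cv n1' by (simp only:) simp
  next
    case False
    define SH where "SH = {h \<in> A. E \<subseteq> \<phi> h}"
    define TH where "TH = A - SH"
    have f1: "{G. G facet_of Q \<and> E \<subseteq> G} = \<phi> ` SH"
      unfolding facets SH_def using vE vQ by (auto simp: A_def \<phi>_def)
    have f2: "{G. G facet_of Q \<and> v \<in> G \<and> \<not> E \<subseteq> G} = \<phi> ` TH"
      unfolding facets TH_def SH_def using vE vQ by (auto simp: A_def \<phi>_def)
    have Eint: "E = \<Inter>{F. F facet_of Q \<and> E \<subseteq> F}"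
      by (rule face_of_polyhedron[OF phQ E]) (use vE False in auto)
    have THne: "TH \<noteq> {}"
    proof
      assume "TH = {}"
      then have "\<forall>h\<in>A. E \<subseteq> \<phi> h" by (auto simp: TH_def SH_def)
      then have allA: "\<forall>h\<in>A. E \<subseteq> \<phi> h" .
      have "E \<subseteq> {v}"
      proof
        fix y assume y: "y \<in> E"
        have "y \<in> Q" using y face_of_imp_subset[OF E] by blast
        moreover have "\<forall>h\<in>A. a h \<bullet> y = b h" using allA y by (auto simp: \<phi>_def)
        ultimately show "y \<in> {v}" using vuniq by blast
      qed
      then have "E = {v}" using vE by auto
      then show False using d1 by simp
    qed
    have THle: "h1 = h2" if h1: "h1 \<in> TH" and h2: "h2 \<in> TH" for h1 h2
    proof (rule ccontr)
      assume ne: "h1 \<noteq> h2"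
      have inE: "u \<in> E" if u: "u \<in> Q" "\<forall>h\<in>SH. a h \<bullet> u = b h" for u
      proof -
        have "u \<in> \<Inter>{F. F facet_of Q \<and> E \<subseteq> F}"
        proof
          fix F assume "F \<in> {F. F facet_of Q \<and> E \<subseteq> F}"
          then have "F \<in> \<phi> ` SH" using f1 by blast
          then show "u \<in> F" using u by (auto simp: \<phi>_def)
        qed
        then show ?thesis using Eint by blast
      qed
      have pt: "\<exists>d. \<exists>t>0. v + t *\<^sub>R d \<in> E \<and> a h \<bullet> d < 0 \<and> a h' \<bullet> d = 0"
        if hT: "h \<in> TH" and h'T: "h' \<in> TH" and hh: "h \<noteq> h'" for h h'
      proof -
        have hA: "h \<in> A" using hT by (simp add: TH_def)
        obtain d where d: "a h \<bullet> d < 0" "\<forall>k\<in>A-{h}. a k \<bullet> d = 0" using dir2[OF hA] by blast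
        have "\<forall>k\<in>A. a k \<bullet> d \<le> 0" using d by (metis Diff_iff empty_iff insert_iff order_refl less_eq_real_def)
        then obtain t where t: "t > 0" "v + t *\<^sub>R d \<in> Q" using dirQ by blast
        have "\<forall>k\<in>SH. a k \<bullet> (v + t *\<^sub>R d) = b k"
        proof
          fix k assume k: "k \<in> SH"
          then have "k \<in> A - {h}" using hT by (auto simp: TH_def SH_def)
          then show "a k \<bullet> (v + t *\<^sub>R d) = b k" using d by (simp add: A_def inner_add_right)
        qed
        then have "v + t *\<^sub>R d \<in> E" using inE t by blast
        moreover have "h' \<in> A - {h}" using h'T hh by (simp add: TH_def)
        then have "a h' \<bullet> d = 0" using d by blast
        ultimately show ?thesis using t d by blast
      qed
      obtain d1 t1 where t1: "t1 > 0" "v + t1 *\<^sub>R d1 \<in> E" "a h1 \<bullet> d1 < 0" "a h2 \<bullet> d1 = 0"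
        using pt[OF h1 h2 ne] by blast
      obtain d2 t2 where t2: "t2 > 0" "v + t2 *\<^sub>R d2 \<in> E" "a h2 \<bullet> d2 < 0" "a h1 \<bullet> d2 = 0"
        using pt[OF h2 h1 ne[symmetric]] by blast
      define u1 where "u1 = t1 *\<^sub>R d1"
      define u2 where "u2 = t2 *\<^sub>R d2"
      have a11: "a h1 \<bullet> u1 < 0" using t1 by (simp add: u1_def mult_pos_neg)
      have a12: "a h1 \<bullet> u2 = 0" using t2 by (simp add: u2_def)
      have a22: "a h2 \<bullet> u2 < 0" using t2 by (simp add: u2_def mult_pos_neg)
      define V where "V = (\<lambda>x. x - v) ` E"
      have u1V: "u1 \<in> V" unfolding V_def u1_def using t1(2) by (metis add_diff_cancel_left' image_eqI)
      have u2V: "u2 \<in> V" unfolding V_def u2_def using t2(2) by (metis add_diff_cancel_left' image_eqI)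
      have u2n: "u2 \<noteq> 0" using a22 by auto
      have u12: "u1 \<noteq> u2" using a11 a12 by auto
      have nsp: "u1 \<notin> span {u2}"
      proof
        assume "u1 \<in> span {u2}"
        then obtain k where "u1 = k *\<^sub>R u2" by (auto simp: span_singleton)
        then have "a h1 \<bullet> u1 = k * (a h1 \<bullet> u2)" by simp
        then show False using a11 a12 by simp
      qed
      have ind: "independent {u1, u2}"
        using u2n u12 nsp by (simp add: independent_insert)
      have "card {u1, u2} \<le> dim V"
        by (rule independent_card_le_dim) (use u1V u2V ind in auto)
      then have "2 \<le> dim V" using u12 by simp
      moreover have "aff_dim E = int (dim V)"
        unfolding V_def by (rule aff_dim_eq_dim_subtract[OF hull_inc[OF vE]])
      ultimately show False using d1 by simp
    qed
    have "card TH = 1"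
    proof -
      obtain h where "h \<in> TH" using THne by blast
      then have "TH = {h}" using THle by blast
      then show ?thesis by simp
    qed
    moreover have "TH \<subseteq> A" "SH \<subseteq> A" by (auto simp: TH_def SH_def)
    moreover have "SH = A - TH" by (auto simp: TH_def SH_def)
    ultimately have cS: "card SH = ?n - 1" and cT: "card TH = 1"
      using cA fA card_Diff_subset[of TH A] finite_subset[of TH A] by simp_all
    show ?thesis
      using f1 f2 cS cT card_image[OF inj_on_subset[OF injphi]] AH \<open>TH \<subseteq> A\<close> \<open>SH \<subseteq> A\<close>
      by (metis subset_trans)
  qed
qed

fun chain :: "('a set set \<times> 'a set \<times> 'a) list \<Rightarrow> bool" where
  "chain (x # y # zs) = (fst y = retract (fst x) (snd (snd x)) \<and> chain (y # zs))"
| "chain _ = True"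

lemma chain_nth: "chain xs \<longleftrightarrow> (\<forall>i. Suc i < length xs \<longrightarrow> fst (xs ! Suc i) = retract (fst (xs!i)) (snd (snd (xs!i))))"
proof (induction xs rule: chain.induct)
  case (1 x y zs)
  show ?case
  proof
    assume c: "chain (x # y # zs)"
    then have a: "fst y = retract (fst x) (snd (snd x))" and ch: "chain (y # zs)" by simp_all
    then have IH: "\<forall>i. Suc i < length (y # zs) \<longrightarrow> fst ((y # zs) ! Suc i) = retract (fst ((y # zs) ! i)) (snd (snd ((y # zs) ! i)))"
      using 1 by blast
    show "\<forall>i. Suc i < length (x # y # zs) \<longrightarrow> fst ((x # y # zs) ! Suc i) = retract (fst ((x # y # zs) ! i)) (snd (snd ((x # y # zs) ! i)))"
    proof (intro allI impI)
      fix i assume i: "Suc i < length (x # y # zs)"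
      show "fst ((x # y # zs) ! Suc i) = retract (fst ((x # y # zs) ! i)) (snd (snd ((x # y # zs) ! i)))"
      proof (cases i)
        case 0 then show ?thesis using a by simp
      next
        case (Suc j)
        then have "Suc j < length (y # zs)" using i by simp
        then show ?thesis using IH Suc by simp
      qed
    qed
  next
    assume h: "\<forall>i. Suc i < length (x # y # zs) \<longrightarrow> fst ((x # y # zs) ! Suc i) = retract (fst ((x # y # zs) ! i)) (snd (snd ((x # y # zs) ! i)))"
    have a: "fst y = retract (fst x) (snd (snd x))" using h[rule_format, of 0] by simp
    have "\<forall>i. Suc i < length (y # zs) \<longrightarrow> fst ((y # zs) ! Suc i) = retract (fst ((y # zs) ! i)) (snd (snd ((y # zs) ! i)))"
    proof (intro allI impI)
      fix i assume "Suc i < length (y # zs)"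
      then show "fst ((y # zs) ! Suc i) = retract (fst ((y # zs) ! i)) (snd (snd ((y # zs) ! i)))"
        using h[rule_format, of "Suc i"] by simp
    qed
    then show "chain (x # y # zs)" using a 1 by simp
  qed
qed auto

lemma chain_Cons: "chain (x # ys) \<longleftrightarrow> (ys = [] \<or> (fst (hd ys) = retract (fst x) (snd (snd x)) \<and> chain ys))"
  by (cases ys) auto

lemma chain_append: "chain (xs @ ys) \<longleftrightarrow> chain xs \<and> chain ys \<and>
   (xs \<noteq> [] \<longrightarrow> ys \<noteq> [] \<longrightarrow> fst (hd ys) = retract (fst (last xs)) (snd (snd (last xs))))"
proof (induction xs)
  case Nil then show ?case by simp
next
  case (Cons x xs)
  show ?case
  proof (cases xs)
    case Nil then show ?thesis by (cases ys) auto
  next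
    case (Cons y zs)
    then show ?thesis using Cons.IH by (simp add: chain_Cons)
  qed
qed

lemma reach_sub: "B \<in> reachable_complexes Q \<Longrightarrow> B \<subseteq> nonempty_faces Q"
  by (induction rule: reachable_complexes.induct) (auto simp: retract_def)

lemma reach_down: "B \<in> reachable_complexes Q \<Longrightarrow> G \<in> B \<Longrightarrow> G' face_of G \<Longrightarrow> G' \<noteq> {} \<Longrightarrow> G' \<in> B"
proof (induction arbitrary: G G' rule: reachable_complexes.induct)
  case start
  then show ?case by (auto simp: nonempty_faces_def intro: face_of_trans)
next
  case (step B b E)
  then have "G \<in> B" "b \<notin> G" by (auto simp: retract_def)
  then have "G' \<in> B" using step by blast
  moreover have "b \<notin> G'" using \<open>b \<notin> G\<close> step.prems(2) face_of_imp_subset by blast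
  ultimately show ?case by (simp add: retract_def)
qed

lemma free_unique: "free_vertex B v E1 \<Longrightarrow> free_vertex B v E2 \<Longrightarrow> E1 = E2"
  unfolding free_vertex_def by blast

lemma g_complex_eq: "free_vertex B v E \<Longrightarrow> g_complex n m F lam B v = g_face n m F lam E v"
  unfolding g_complex_def using free_unique by (metis the_equality)

lemma last_case:
  assumes pQ: "polytope Q" and B: "B \<in> reachable_complexes Q" and fv: "free_vertex B b E"
    and em: "retract B b = {}"
  shows "B = {{b}} \<and> E = {b}"
proof -
  have allb: "\<forall>G\<in>B. b \<in> G" using em by (auto simp: retract_def)
  have one: "G = {b}" if G: "G \<in> B" for G
  proof -
    have Gf: "G face_of Q" "G \<noteq> {}" using reach_sub[OF B] G by (auto simp: nonempty_faces_def)
    have pG: "polytope G" using face_of_polytope_polytope[OF pQ Gf(1)] .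
    have ext: "{x. x extreme_point_of G} \<subseteq> {b}"
    proof
      fix x assume "x \<in> {x. x extreme_point_of G}"
      then have "{x} face_of G" by (simp add: face_of_singleton)
      then have xB: "{x} \<in> B" using reach_down[OF B G] by simp
      have "b \<in> {x}" using allb xB by (rule bspec)
      then show "x \<in> {b}" by simp
    qed
    have "G = convex hull {x. x extreme_point_of G}"
      by (rule Krein_Milman_Minkowski[OF polytope_imp_compact[OF pG] polytope_imp_convex[OF pG]])
    also have "\<dots> \<subseteq> convex hull {b}" using ext by (rule hull_mono)
    finally have "G \<subseteq> {b}" by simp
    then show ?thesis using Gf(2) by blast
  qed
  have "{b} \<in> B" "E \<in> B" using fv by (auto simp: free_vertex_def)
  then show ?thesis using one by blast
qed

lemma start_E:
  assumes pQ: "polytope Q" and fv: "free_vertex (nonempty_faces Q) b E"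
  shows "E = Q"
proof -
  have "{b} face_of Q" using fv by (auto simp: free_vertex_def nonempty_faces_def)
  then have bQ: "b \<in> Q" using face_of_imp_subset by blast
  have "Q \<in> nonempty_faces Q" using bQ face_of_refl[OF polytope_imp_convex[OF pQ]]
    by (auto simp: nonempty_faces_def)
  then have "Q \<subseteq> E" using fv bQ by (auto simp: free_vertex_def)
  moreover have "E \<subseteq> Q" using fv by (auto simp: free_vertex_def nonempty_faces_def dest: face_of_imp_subset)
  ultimately show ?thesis by blast
qed

lemma finite_reach: "polytope Q \<Longrightarrow> B \<in> reachable_complexes Q \<Longrightarrow> finite B"
  using reach_sub finite_polytope_faces unfolding nonempty_faces_def
  by (metis (no_types, lifting) finite_subset mem_Collect_eq subsetI)

lemma tail_exists:
  assumes pQ: "polytope Q"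
    and good: "\<forall>B\<in>reachable_complexes Q. \<exists>v E. free_vertex B v E \<and> P B E v"
  shows "B \<in> reachable_complexes Q \<Longrightarrow> \<exists>ts. ts \<noteq> [] \<and> fst (hd ts) = B \<and>
     (\<forall>(B',E,b)\<in>set ts. free_vertex B' b E \<and> P B' E b) \<and> chain ts \<and>
     fst (last ts) = {{snd (snd (last ts))}} \<and> fst (snd (last ts)) = {snd (snd (last ts))}"
proof (induction "card B" arbitrary: B rule: less_induct)
  case less
  obtain v E where vE: "free_vertex B v E" "P B E v" using good less.prems by blast
  show ?case
  proof (cases "retract B v = {}")
    case True
    then have "B = {{v}} \<and> E = {v}" using last_case[OF pQ less.prems vE(1)] by blast
    then show ?thesis using vE by (intro exI[of _ "[(B,E,v)]"]) auto
  next
    case False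
    let ?B' = "retract B v"
    have B': "?B' \<in> reachable_complexes Q"
      using reachable_complexes.step[OF less.prems vE(1) False] .
    have "?B' \<subset> B"
    proof -
      have "{v} \<in> B" using vE(1) by (simp add: free_vertex_def)
      moreover have "{v} \<notin> ?B'" by (simp add: retract_def)
      ultimately show ?thesis by (auto simp: retract_def)
    qed
    then have "card ?B' < card B" using finite_reach[OF pQ less.prems] by (rule psubset_card_mono[rotated])
    then obtain ts where ts: "ts \<noteq> []" "fst (hd ts) = ?B'"
      "\<forall>(B',E,b)\<in>set ts. free_vertex B' b E \<and> P B' E b" "chain ts"
      "fst (last ts) = {{snd (snd (last ts))}}" "fst (snd (last ts)) = {snd (snd (last ts))}"
      using less.hyps B' by blast
    have c1: "\<forall>(B',E,b)\<in>set ((B,E,v) # ts). free_vertex B' b E \<and> P B' E b"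
      using ts(3) vE by simp
    have c2: "chain ((B,E,v) # ts)" using ts(2,4) by (simp add: chain_Cons)
    have c3: "last ((B,E,v) # ts) = last ts" using ts(1) by simp
    show ?thesis
    proof (intro exI[of _ "(B,E,v) # ts"] conjI)
      show "(B,E,v) # ts \<noteq> []" by simp
      show "fst (hd ((B,E,v) # ts)) = B" by simp
      show "\<forall>(B',E,b)\<in>set ((B,E,v) # ts). free_vertex B' b E \<and> P B' E b" by (rule c1)
      show "chain ((B,E,v) # ts)" by (rule c2)
      show "fst (last ((B,E,v) # ts)) = {{snd (snd (last ((B,E,v) # ts)))}}"
        unfolding c3 by (rule ts(5))
      show "fst (snd (last ((B,E,v) # ts))) = {snd (snd (last ((B,E,v) # ts)))}"
        unfolding c3 by (rule ts(6))
    qed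
  qed
qed

lemma prefix_exists:
  "B \<in> reachable_complexes Q \<Longrightarrow> \<exists>pre. (\<forall>(B',E,b)\<in>set pre. free_vertex B' b E) \<and> chain pre \<and>
     (if pre = [] then B = nonempty_faces Q
      else fst (hd pre) = nonempty_faces Q \<and> B = retract (fst (last pre)) (snd (snd (last pre))))"
proof (induction rule: reachable_complexes.induct)
  case start
  show ?case by (intro exI[of _ "[]"]) simp
next
  case (step B b E)
  then obtain pre where pre: "\<forall>(B',E,b)\<in>set pre. free_vertex B' b E" "chain pre"
     "if pre = [] then B = nonempty_faces Q
      else fst (hd pre) = nonempty_faces Q \<and> B = retract (fst (last pre)) (snd (snd (last pre)))"
    by blast
  show ?case
  proof (intro exI[of _ "pre @ [(B,E,b)]"] conjI)
    show "\<forall>(B',E,b)\<in>set (pre @ [(B,E,b)]). free_vertex B' b E" using pre(1) step(2) by auto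
    have l: "pre \<noteq> [] \<Longrightarrow> B = retract (fst (last pre)) (snd (snd (last pre)))"
      using pre(3) by simp
    show "chain (pre @ [(B,E,b)])" using pre(2) l by (simp add: chain_append)
    have h: "fst (hd (pre @ [(B, E, b)])) = nonempty_faces Q"
    proof (cases "pre = []")
      case True then show ?thesis using pre(3) by simp
    next
      case False then show ?thesis using pre(3) by simp
    qed
    show "if pre @ [(B, E, b)] = [] then retract B b = nonempty_faces Q
      else fst (hd (pre @ [(B, E, b)])) = nonempty_faces Q \<and>
           retract B b = retract (fst (last (pre @ [(B, E, b)]))) (snd (snd (last (pre @ [(B, E, b)]))))"
      using h by simp
  qed
qed

lemma combine:
  assumes pQ: "polytope Q" and adm: "admissible Q" and B: "B \<in> reachable_complexes Q"
  shows "\<exists>rs i. retraction_seq Q rs \<and> i < length rs \<and> fst (rs ! i) = B"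
proof -
  have good: "\<forall>B\<in>reachable_complexes Q. \<exists>v E. free_vertex B v E \<and> (\<lambda>_ _ _. True) B E v"
    using adm unfolding admissible_def by blast
  obtain ts where ts: "ts \<noteq> []" "fst (hd ts) = B"
      "\<forall>(B',E,b)\<in>set ts. free_vertex B' b E \<and> True" "chain ts"
      "fst (last ts) = {{snd (snd (last ts))}}" "fst (snd (last ts)) = {snd (snd (last ts))}"
    using tail_exists[OF pQ good B] by blast
  obtain pre where pre: "\<forall>(B',E,b)\<in>set pre. free_vertex B' b E" "chain pre"
     "if pre = [] then B = nonempty_faces Q
      else fst (hd pre) = nonempty_faces Q \<and> B = retract (fst (last pre)) (snd (snd (last pre)))"
    using prefix_exists[OF B] by blast
  define rs where "rs = pre @ ts"
  have fv: "\<forall>x\<in>set rs. free_vertex (fst x) (snd (snd x)) (fst (snd x))"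
    using ts(3) pre(1) by (auto simp: rs_def)
  have hd: "fst (hd rs) = nonempty_faces Q" using ts pre(3) by (auto simp: rs_def split: if_splits)
  have rsne: "rs \<noteq> []" using ts by (simp add: rs_def)
  have r0: "rs ! 0 = hd rs" using rsne by (simp add: hd_conv_nth)
  have ch: "chain rs" using ts pre by (auto simp: rs_def chain_append split: if_splits)
  have lst: "last rs = last ts" using ts by (simp add: rs_def)
  have "free_vertex (fst (rs!0)) (snd (snd (rs!0))) (fst (snd (rs!0)))" using fv rsne by simp
  then have E0: "fst (snd (rs ! 0)) = Q" using start_E[OF pQ] hd r0 by metis
  have "retraction_seq Q rs"
    unfolding retraction_seq_def
    using rsne hd r0 E0 fv ch[unfolded chain_nth] lst ts(5,6) by (auto simp: nth_mem)
  moreover have "length pre < length rs" "fst (rs ! length pre) = B"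
    using ts by (auto simp: rs_def nth_append hd_conv_nth)
  ultimately show ?thesis by blast
qed

lemma absdiv: "(a::int) \<noteq> 0 \<Longrightarrow> \<bar>a div \<bar>a\<bar>\<bar> = 1"
proof -
  assume a: "a \<noteq> 0"
  have "a div \<bar>a\<bar> = (sgn a * \<bar>a\<bar>) div \<bar>a\<bar>" by (simp add: sgn_mult_abs)
  also have "\<dots> = sgn a" using a by simp
  finally show ?thesis using a by (cases "a > 0") auto
qed

lemma card_idx:
  assumes "bij_betw F {..<m} {G. G facet_of Q}"
  shows "card {i. i < m \<and> R (F i)} = card {G. G facet_of Q \<and> R G}"
proof -
  have inj0: "inj_on F {..<m}" and im0: "F ` {..<m} = {G. G facet_of Q}"
    using assms by (simp_all add: bij_betw_def)
  have inj: "inj_on F {i. i < m \<and> R (F i)}" by (rule inj_on_subset[OF inj0]) auto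
  have "F ` {i. i < m \<and> R (F i)} = {G. G facet_of Q \<and> R G}"
  proof
    show "F ` {i. i < m \<and> R (F i)} \<subseteq> {G. G facet_of Q \<and> R G}"
    proof
      fix G assume "G \<in> F ` {i. i < m \<and> R (F i)}"
      then obtain i where i: "i < m" "R (F i)" "G = F i" by blast
      then have "G \<in> F ` {..<m}" by blast
      then show "G \<in> {G. G facet_of Q \<and> R G}" unfolding im0 using i by blast
    qed
  next
    show "{G. G facet_of Q \<and> R G} \<subseteq> F ` {i. i < m \<and> R (F i)}"
    proof
      fix G assume G: "G \<in> {G. G facet_of Q \<and> R G}"
      then have "G \<in> F ` {..<m}" unfolding im0 by blast
      then obtain i where "i < m" "G = F i" by blast
      then show "G \<in> F ` {i. i < m \<and> R (F i)}" using G by blast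
    qed
  qed
  then show ?thesis using card_image[OF inj] by simp
qed

lemma g_vertex:
  fixes Q :: "'a::euclidean_space set"
  assumes sp: "simple_polytope Q" and rc: "R_characteristic Q m F lam" and vv: "{v} face_of Q"
  shows "g_face DIM('a) m F lam {v} v = 1"
proof -
  have bij: "bij_betw F {..<m} {G. G facet_of Q}" using rc by (simp add: R_characteristic_def)
  have "card {G. G facet_of Q \<and> v \<in> G} = DIM('a)"
    using sp vv by (simp add: simple_polytope_def is_vertex_def)
  then have c: "card (facet_idx m F {v}) = DIM('a)"
    unfolding facet_idx_def using card_idx[OF bij, of "\<lambda>G. {v} \<subseteq> G"] by simp
  have e: "{j. j < m \<and> v \<in> F j \<and> \<not> {v} \<subseteq> F j} = {}" by auto
  have "mat_of_rows 0 [] \<in> carrier_mat 0 (0::nat)" by (simp add: mat_of_rows_def)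
  then have "det (mat_of_rows 0 ([] :: int vec list)) = 1" by (rule det_dim_zero)
  then show ?thesis unfolding g_face_def c e by simp
qed

lemma g_edge:
  fixes Q :: "'a::euclidean_space set"
  assumes sp: "simple_polytope Q" and rc: "R_characteristic Q m F lam"
    and E: "E face_of Q" and vE: "v \<in> E" and vv: "{v} face_of Q" and d1: "aff_dim E = 1"
  shows "g_face DIM('a) m F lam E v = 1"
proof -
  let ?n = "DIM('a)"
  have bij: "bij_betw F {..<m} {G. G facet_of Q}"
    and carl: "\<forall>i<m. lam i \<in> carrier_vec ?n"
    and ind: "\<forall>S\<subseteq>{..<m}. (\<Inter>i\<in>S. F i) \<inter> Q \<noteq> {} \<longrightarrow> lin_indep_family ?n lam S"
    using rc by (auto simp: R_characteristic_def)
  have geo: "card {G. G facet_of Q \<and> E \<subseteq> G} = ?n - 1"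
    "card {G. G facet_of Q \<and> v \<in> G \<and> \<not> E \<subseteq> G} = 1"
    using geo_edge[OF sp E vE vv d1] by auto
  define S where "S = facet_idx m F E"
  have cS: "card S = ?n - 1"
    unfolding S_def facet_idx_def using card_idx[OF bij, of "\<lambda>G. E \<subseteq> G"] geo by simp
  have "card {j. j < m \<and> v \<in> F j \<and> \<not> E \<subseteq> F j} = 1"
    using card_idx[OF bij, of "\<lambda>G. v \<in> G \<and> \<not> E \<subseteq> G"] geo by simp
  then obtain j where J: "{j. j < m \<and> v \<in> F j \<and> \<not> E \<subseteq> F j} = {j}" by (rule card_1_singletonE)
  then have jm: "j < m" "v \<in> F j" "\<not> E \<subseteq> F j" by auto
  have Sm: "S \<subseteq> {..<m}" by (auto simp: S_def facet_idx_def)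
  have fS: "finite S" using Sm finite_subset by blast
  have vS: "\<forall>i\<in>S. v \<in> F i" using vE by (auto simp: S_def facet_idx_def)
  have vQ: "v \<in> Q" using vv face_of_imp_subset by blast
  have "v \<in> (\<Inter>i\<in>S. F i) \<inter> Q" using vS vQ by blast
  then have indS: "lin_indep_family ?n lam S" using ind Sm by blast
  have "v \<in> (\<Inter>i\<in>insert j S. F i) \<inter> Q" using vS vQ jm by blast
  moreover have "insert j S \<subseteq> {..<m}" using Sm jm by auto
  ultimately have indSj: "lin_indep_family ?n lam (insert j S)" using ind by blast
  have jS: "j \<notin> S" using jm by (auto simp: S_def facet_idx_def)
  have notspan: "\<not>(\<exists>c::nat\<Rightarrow>real. \<forall>k<?n. real_of_int (lam j $ k) = (\<Sum>i\<in>S. c i * real_of_int (lam i $ k)))"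
  proof
    assume "\<exists>c::nat\<Rightarrow>real. \<forall>k<?n. real_of_int (lam j $ k) = (\<Sum>i\<in>S. c i * real_of_int (lam i $ k))"
    then obtain c :: "nat \<Rightarrow> real" where c: "\<forall>k<?n. real_of_int (lam j $ k) = (\<Sum>i\<in>S. c i * real_of_int (lam i $ k))"
      by blast
    define c' where "c' i = (if i = j then -1 else c i)" for i
    have "\<forall>k<?n. (\<Sum>i\<in>insert j S. c' i * real_of_int (lam i $ k)) = 0"
    proof (intro allI impI)
      fix k assume k: "k < ?n"
      have "(\<Sum>i\<in>insert j S. c' i * real_of_int (lam i $ k)) =
            c' j * real_of_int (lam j $ k) + (\<Sum>i\<in>S. c' i * real_of_int (lam i $ k))"
        using fS jS by simp
      also have "(\<Sum>i\<in>S. c' i * real_of_int (lam i $ k)) = (\<Sum>i\<in>S. c i * real_of_int (lam i $ k))"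
        using jS by (intro sum.cong) (auto simp: c'_def)
      finally show "(\<Sum>i\<in>insert j S. c' i * real_of_int (lam i $ k)) = 0"
        using c k by (simp add: c'_def)
    qed
    then have "c' j = 0" using indSj unfolding lin_indep_family_def by blast
    then show False by (simp add: c'_def)
  qed
  have n1: "?n \<ge> 1" by (simp add: DIM_positive Suc_leI)
  have carS: "\<And>i. i \<in> S \<Longrightarrow> lam i \<in> carrier_vec ?n" using carl Sm by auto
  have carj: "lam j \<in> carrier_vec ?n" using carl jm by auto
  obtain \<rho>0 where \<rho>0: "(\<forall>x\<in>carrier_vec ?n. \<forall>y\<in>carrier_vec ?n. \<rho>0 (x + y) = \<rho>0 x + \<rho>0 y) \<and>
       (\<forall>x\<in>carrier_vec ?n. \<forall>c. \<rho>0 (c \<cdot>\<^sub>v x) = c \<cdot>\<^sub>v \<rho>0 x) \<and>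
       \<rho>0 ` carrier_vec ?n = carrier_vec 1 \<and>
       {x \<in> carrier_vec ?n. \<rho>0 x = 0\<^sub>v 1} = {x \<in> carrier_vec ?n. \<exists>c :: nat \<Rightarrow> real.
          \<forall>j<?n. real_of_int (x $ j) = (\<Sum>i\<in>S. c i * real_of_int (lam i $ j))}"
    using lattice_rho[OF n1 fS cS carS indS carj notspan] by blast
  have k1: "?n - card (facet_idx m F E) = 1" using cS n1 by (simp add: S_def)
  have isr: "is_rho ?n m F lam E \<rho>0"
  proof -
    have k1S: "?n - card S = 1" using cS n1 by simp
    show ?thesis
      unfolding is_rho_def Let_def sat_lattice_def S_def[symmetric] k1S using \<rho>0 by blast
  qed
  define r where "r = rho ?n m F lam E"
  have risr: "is_rho ?n m F lam E r" unfolding r_def rho_def by (rule someI[of _ \<rho>0]) (rule isr)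
  then have rim: "r ` carrier_vec ?n = carrier_vec 1"
    and rker: "{x \<in> carrier_vec ?n. r x = 0\<^sub>v 1} = sat_lattice ?n m F lam E"
    unfolding is_rho_def Let_def k1 by auto
  have rc1: "r (lam j) \<in> carrier_vec 1" using rim carj by blast
  have rnz: "r (lam j) \<noteq> 0\<^sub>v 1"
  proof
    assume "r (lam j) = 0\<^sub>v 1"
    then have "lam j \<in> sat_lattice ?n m F lam E" using rker carj by blast
    then show False using notspan unfolding sat_lattice_def S_def by blast
  qed
  define a where "a = r (lam j) $ 0"
  have rv: "r (lam j) = vec 1 (\<lambda>_. a)" unfolding a_def by (rule vec1_eq[OF rc1])
  have a0: "a \<noteq> 0"
  proof
    assume "a = 0"
    then have "r (lam j) = 0\<^sub>v 1" using rv by (auto intro!: eq_vecI)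
    then show False using rnz by simp
  qed
  have sv: "set\<^sub>v (r (lam j)) = {a}" using rv by (simp add: vec_set_def lessThan_Suc)
  have pd: "primitive_dir (r (lam j)) = vec 1 (\<lambda>_. a div \<bar>a\<bar>)"
    unfolding primitive_dir_def sv using rv by (auto intro!: eq_vecI)
  have sl: "sorted_list_of_set {j. j < m \<and> v \<in> F j \<and> \<not> E \<subseteq> F j} = [j]" using J by simp
  have Mc: "mat_of_rows 1 [primitive_dir (r (lam j))] \<in> carrier_mat 1 1" by (simp add: mat_of_rows_def)
  have "det (mat_of_rows 1 [primitive_dir (r (lam j))]) = (mat_of_rows 1 [primitive_dir (r (lam j))]) $$ (0,0)"
    by (rule det_single[OF Mc])
  also have "\<dots> = primitive_dir (r (lam j)) $ 0" by (simp add: mat_of_rows_def)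
  also have "\<dots> = a div \<bar>a\<bar>" unfolding pd by simp
  finally have dt: "det (mat_of_rows 1 [primitive_dir (r (lam j))]) = a div \<bar>a\<bar>" .
  have gf: "g_face ?n m F lam E v = nat \<bar>det (mat_of_rows 1 [primitive_dir (r (lam j))])\<bar>"
    unfolding g_face_def k1 sl r_def by simp
  show ?thesis unfolding gf dt using absdiv[OF a0] by simp
qed

theorem mainTheorem7:
  fixes Q :: "'a::euclidean_space set"
    and m :: nat and F :: "nat \<Rightarrow> 'a set" and lam :: "nat \<Rightarrow> int vec"
  assumes "simple_polytope Q"
    and "R_characteristic Q m F lam"
    and "admissible Q"
    and "\<forall>rs i. retraction_seq Q rs \<and> i < length rs \<and> complex_dim_gt1 (fst (rs ! i)) \<longrightarrow>
           Gcd {g_complex DIM('a) m F lam (fst (rs ! i)) v | v. \<exists>E. free_vertex (fst (rs ! i)) v E} = 1"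
  shows "\<forall>p::nat. prime p \<longrightarrow>
           (\<exists>rs. retraction_seq Q rs \<and>
              (\<forall>i<length rs. gcd p (g_face DIM('a) m F lam (fst (snd (rs ! i))) (snd (snd (rs ! i)))) = 1))"
proof (intro allI impI)
  fix p :: nat assume pp: "prime p"
  have pQ: "polytope Q" using assms(1) by (simp add: simple_polytope_def)
  define P where "P = (\<lambda>(B::'a set set) E v. gcd p (g_face DIM('a) m F lam E v) = 1)"
  have good: "\<forall>B\<in>reachable_complexes Q. \<exists>v E. free_vertex B v E \<and> P B E v"
  proof
    fix B assume B: "B \<in> reachable_complexes Q"
    show "\<exists>v E. free_vertex B v E \<and> P B E v"
    proof (cases "complex_dim_gt1 B")
      case True
      obtain rs i where rs: "retraction_seq Q rs" "i < length rs" "fst (rs ! i) = B"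
        using combine[OF pQ assms(3) B] by blast
      have "Gcd {g_complex DIM('a) m F lam (fst (rs ! i)) v | v. \<exists>E. free_vertex (fst (rs ! i)) v E} = 1"
        using assms(4) rs True by blast
      then have G1: "Gcd {g_complex DIM('a) m F lam B v | v. \<exists>E. free_vertex B v E} = 1"
        using rs(3) by simp
      show ?thesis
      proof (rule ccontr)
        assume nt: "\<not> ?thesis"
        have dv: "p dvd g_face DIM('a) m F lam E v" if "free_vertex B v E" for v E
        proof (rule ccontr)
          assume "\<not> p dvd g_face DIM('a) m F lam E v"
          then have "coprime p (g_face DIM('a) m F lam E v)" by (rule prime_imp_coprime[OF pp])
          then have "P B E v" by (simp add: P_def)
          then show False using nt that by blast
        qed
        have "p dvd Gcd {g_complex DIM('a) m F lam B v | v. \<exists>E. free_vertex B v E}"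
        proof (rule Gcd_greatest)
          fix x assume "x \<in> {g_complex DIM('a) m F lam B v | v. \<exists>E. free_vertex B v E}"
          then obtain v E where "x = g_complex DIM('a) m F lam B v" "free_vertex B v E" by blast
          then show "p dvd x" using dv g_complex_eq by metis
        qed
        then have "p dvd 1" using G1 by simp
        then show False using pp by simp
      qed
    next
      case False
      obtain v E where fv: "free_vertex B v E" using assms(3) B unfolding admissible_def by blast
      have EB: "E \<in> B" "{v} \<in> B" "v \<in> E" using fv by (auto simp: free_vertex_def)
      then have Ef: "E face_of Q" "E \<noteq> {}" "{v} face_of Q"
        using reach_sub[OF B] by (auto simp: nonempty_faces_def)
      have "aff_dim E \<le> 1" using False EB unfolding complex_dim_gt1_def by auto
      moreover have "\<not> aff_dim E < 0" using Ef(2) by (simp add: aff_dim_negative_iff)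
      ultimately have "aff_dim E = 0 \<or> aff_dim E = 1" by linarith
      then have "g_face DIM('a) m F lam E v = 1"
      proof
        assume "aff_dim E = 0"
        then obtain a where "E = {a}" using aff_dim_eq_0 by blast
        then have "E = {v}" using EB by simp
        then show ?thesis using g_vertex[OF assms(1,2) Ef(3)] by simp
      next
        assume "aff_dim E = 1"
        then show ?thesis using g_edge[OF assms(1,2) Ef(1) EB(3) Ef(3)] by simp
      qed
      then have "P B E v" by (simp add: P_def)
      then show ?thesis using fv by blast
    qed
  qed
  obtain ts where ts: "ts \<noteq> []" "fst (hd ts) = nonempty_faces Q"
      "\<forall>(B',E,b)\<in>set ts. free_vertex B' b E \<and> P B' E b" "chain ts"
      "fst (last ts) = {{snd (snd (last ts))}}" "fst (snd (last ts)) = {snd (snd (last ts))}"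
    using tail_exists[OF pQ good reachable_complexes.start] by blast
  have fv: "\<forall>x\<in>set ts. free_vertex (fst x) (snd (snd x)) (fst (snd x))"
    using ts(3) by auto
  have gd: "\<forall>x\<in>set ts. gcd p (g_face DIM('a) m F lam (fst (snd x)) (snd (snd x))) = 1"
    using ts(3) by (auto simp: P_def)
  have r0: "ts ! 0 = hd ts" using ts(1) by (simp add: hd_conv_nth)
  have "free_vertex (fst (ts!0)) (snd (snd (ts!0))) (fst (snd (ts!0)))" using fv ts(1) by simp
  then have E0: "fst (snd (ts ! 0)) = Q" using start_E[OF pQ] ts(2) r0 by metis
  have "retraction_seq Q ts"
    unfolding retraction_seq_def
    using ts(1,2,5,6) r0 E0 fv ts(4)[unfolded chain_nth] by (auto simp: nth_mem)
  moreover have "\<forall>i<length ts. gcd p (g_face DIM('a) m F lam (fst (snd (ts ! i))) (snd (snd (ts ! i)))) = 1"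
    using gd by (auto simp: nth_mem)
  ultimately show "\<exists>rs. retraction_seq Q rs \<and>
              (\<forall>i<length rs. gcd p (g_face DIM('a) m F lam (fst (snd (rs ! i))) (snd (snd (rs ! i)))) = 1)"
    by blast
qed

end
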